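(* For $u_1,u_2>0$ let $$M(u_1,u_2)=u_1+u_2-2i\sum_{r,s=1}^{\infty}\frac{(iu_1)^r(iu_2)^s\,(r+s-2)!}{r!\,s!\,(r-1)!\,(s-1)!}.$$ Consider the points $u>0$ such that $(u,u)$ is a stationary point of $M$, i.e. $\frac{\partial M}{\partial u_1}(u,u)=\frac{\partial M}{\partial u_2}(u,u)=0$, and to each such point associate $\tau=M(u,u)/(2i)$. Among all these values, the one of smallest modulus is $\tau_s=M(u_s,u_s)/(2i)$, where $u_s\approx1.202$ is the smallest such point (the smallest positive $u$ with $J_0(2u)=0$, $J_0$ the Bessel function of the first kind). *)

theory Defs
  imports "HOL-Analysis.Analysis"
begin

definition M_term :: "real \<Rightarrow> real \<Rightarrow> nat \<times> nat \<Rightarrow> complex" where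
  "M_term u1 u2 = (\<lambda>(r,s). (\<i> * complex_of_real u1) ^ r * (\<i> * complex_of_real u2) ^ s
       * of_nat (fact (r + s - 2))
       / (of_nat (fact r) * of_nat (fact s) * of_nat (fact (r - 1)) * of_nat (fact (s - 1))))"

definition M :: "real \<Rightarrow> real \<Rightarrow> complex" where
  "M u1 u2 = complex_of_real u1 + complex_of_real u2
     - 2 * \<i> * infsum (M_term u1 u2) ({1..} \<times> {1..})"

definition BesselJ0 :: "real \<Rightarrow> real" where
  "BesselJ0 x = (\<Sum>k. (-1) ^ k * (x / 2) ^ (2 * k) / (fact k) ^ 2)"

definition stationary_diag :: "real \<Rightarrow> bool" where
  "stationary_diag u \<longleftrightarrow> u > 0 \<and>
     ((\<lambda>t. M t u) has_vector_derivative 0) (at u) \<and>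
     ((\<lambda>t. M u t) has_vector_derivative 0) (at u)"

end

theory Submission
  imports Defs "HOL-Computational_Algebra.Polynomial"
begin

lemma prod_summable_on:
  fixes f g :: "nat \<Rightarrow> real"
  assumes f0: "\<And>n. f n \<ge> 0" and g0: "\<And>n. g n \<ge> 0" and sf: "summable f" and sg: "summable g"
  shows "(\<lambda>(a,b). f a * g b) summable_on UNIV"
proof (rule nonneg_bdd_above_summable_on)
  show "\<And>x. x \<in> UNIV \<Longrightarrow> 0 \<le> (case x of (a, b) \<Rightarrow> f a * g b)" using f0 g0 by (auto simp: split_beta)
  show "bdd_above (sum (\<lambda>(a, b). f a * g b) ` {F. F \<subseteq> UNIV \<and> finite F})"
  proof (rule bdd_aboveI2)
    fix F :: "(nat\<times>nat) set" assume "F \<in> {F. F \<subseteq> UNIV \<and> finite F}"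
    hence fin: "finite F" by auto
    have "sum (\<lambda>(a, b). f a * g b) F \<le> sum (\<lambda>(a, b). f a * g b) (fst ` F \<times> snd ` F)"
      by (rule sum_mono2) (use fin f0 g0 in \<open>auto simp: mult_nonneg_nonneg intro: rev_image_eqI\<close>)
    also have "\<dots> = (\<Sum>a\<in>fst ` F. f a) * (\<Sum>b\<in>snd ` F. g b)"
      by (simp add: sum_product sum.cartesian_product)
    also have "\<dots> \<le> suminf f * suminf g"
      by (intro mult_mono sum_le_suminf sf sg) (auto simp: fin f0 g0 intro: sum_nonneg suminf_nonneg[OF sf] suminf_nonneg[OF sg])
    finally show "sum (\<lambda>(a, b). f a * g b) F \<le> suminf f * suminf g" .
  qed
qed

lemma se: "summable (\<lambda>n. (x::real)^n / fact n)"
  using summable_exp[of x] by (simp add: divide_inverse mult.commute)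

lemma fam_summable:
  fixes h :: "nat \<times> nat \<Rightarrow> complex"
  assumes "\<And>a b. norm (h (a,b)) \<le> C * (A^a / fact a) * (B^b / fact b)" "A \<ge> 0" "B \<ge> 0"
  shows "h summable_on UNIV"
proof -
  have "(\<lambda>(a,b). (C * (A^a / fact a)) * (B^b / fact b)) summable_on UNIV"
  proof -
    have "norm (h (0,0)) \<le> C" using assms(1)[of 0 0] by simp
    hence C0: "C \<ge> 0" using norm_ge_zero order_trans by blast
    show ?thesis
    proof (rule prod_summable_on)
      show "\<And>n. 0 \<le> C*(A^n/fact n)" using C0 assms by simp
      show "\<And>n. 0 \<le> B^n/fact n" using assms by simp
      show "summable (\<lambda>a. C*(A^a/fact a))" by (rule summable_mult[OF se])
      show "summable (\<lambda>b. B^b/fact b)" by (rule se)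
    qed
  qed
  hence "(\<lambda>x. norm (h x)) summable_on UNIV"
    by (rule Infinite_Sum.abs_summable_on_comparison_test') (use assms(1) in auto)
  thus ?thesis by (rule abs_summable_summable)
qed

lemma rows_sums:
  fixes g :: "nat \<times> nat \<Rightarrow> complex"
  assumes "g summable_on UNIV"
  shows "(\<lambda>a. infsum (\<lambda>b. g (a,b)) UNIV) sums infsum g UNIV"
    and "\<And>a. (\<lambda>b. g (a,b)) summable_on UNIV"
proof -
  have S: "(\<lambda>(x,y). g (x,y)) summable_on (Sigma UNIV (\<lambda>_. UNIV))" using assms by simp
  show inner: "\<And>a. (\<lambda>b. g (a,b)) summable_on UNIV"
  proof -
    fix a
    have "g summable_on (Pair a ` UNIV)" using assms summable_on_subset_banach by blast
    thus "(\<lambda>b. g (a,b)) summable_on UNIV"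
      by (subst (asm) summable_on_reindex) (auto simp: inj_on_def o_def)
  qed
  have "((\<lambda>a. infsum (\<lambda>b. g (a,b)) UNIV) has_sum infsum g UNIV) UNIV"
    by (rule has_sum_Sigma'[where f=g and B="\<lambda>_. UNIV"]) (use assms inner in \<open>auto simp: has_sum_infsum\<close>)
  thus "(\<lambda>a. infsum (\<lambda>b. g (a,b)) UNIV) sums infsum g UNIV" by (rule has_sum_imp_sums)
qed

lemma diag_sums:
  fixes g :: "nat \<times> nat \<Rightarrow> complex"
  assumes "g summable_on UNIV"
  shows "(\<lambda>N. \<Sum>a\<le>N. g (a, N-a)) sums infsum g UNIV"
proof -
  have bij: "bij_betw (\<lambda>(N,a). (a, N-a)) (Sigma UNIV (\<lambda>N::nat. {..N})) (UNIV::(nat\<times>nat) set)"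
    unfolding bij_betw_def
  proof (intro conjI)
    show "inj_on (\<lambda>(N,a). (a, N-a)) (Sigma UNIV (\<lambda>N::nat. {..N}))" by (auto simp: inj_on_def)
    show "(\<lambda>(N,a). (a, N-a)) ` (Sigma UNIV (\<lambda>N::nat. {..N})) = UNIV"
    proof safe
      fix a b :: nat show "(a,b) \<in> (\<lambda>(N,a). (a, N-a)) ` (Sigma UNIV (\<lambda>N. {..N}))"
        by (rule rev_image_eqI[of "(a+b,a)"]) auto
    qed auto
  qed
  have "(g has_sum infsum g UNIV) UNIV" using assms by (simp add: has_sum_infsum)
  hence "((\<lambda>x. g ((\<lambda>(N,a). (a, N-a)) x)) has_sum infsum g UNIV) (Sigma UNIV (\<lambda>N. {..N}))"
    by (subst has_sum_reindex_bij_betw[OF bij])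
  hence "((\<lambda>N. \<Sum>a\<le>N. g (a, N-a)) has_sum infsum g UNIV) UNIV"
    by (rule has_sum_Sigma') (auto simp: has_sum_finite)
  thus ?thesis by (rule has_sum_imp_sums)
qed

definition d :: "nat \<Rightarrow> nat \<Rightarrow> real" where
  "d a b = fact (a+b) / (fact (a+1) * fact (b+1) * fact a * fact b)"

lemma d_nonneg: "d a b \<ge> 0" unfolding d_def by (intro divide_nonneg_nonneg mult_nonneg_nonneg) auto

lemma d_alt: "d a b = real ((a+b) choose a) / (fact (a+1) * fact (b+1))"
proof -
  have "fact a * fact b * ((a+b) choose a) = fact (a+b)"
    using binomial_fact_lemma[of a "a+b"] by simp
  hence "real (fact a * fact b * ((a+b) choose a)) = real (fact (a+b))" by metis
  hence "fact (a+b) = real ((a+b) choose a) * fact a * fact b"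
    by (simp only: of_nat_mult of_nat_fact) (simp add: mult_ac)
  thus ?thesis unfolding d_def by simp
qed

lemma fact_plus1: "(fact (n+1) :: real) = (real n+1) * fact n"
  by (simp add: fact_Suc algebra_simps)

lemma choose_le_real: "real (n choose k) \<le> 2^n"
proof -
  have "real (n choose k) \<le> real (2^n)" using binomial_le_pow2[of n k] by (simp only: of_nat_le_iff)
  thus ?thesis by simp
qed

lemma cancel_aux: "(x::real) \<noteq> 0 \<Longrightarrow> F \<noteq> 0 \<Longrightarrow> B \<noteq> 0 \<Longrightarrow> x * (X / (x*F*B)) = X/(F*B)"
  by (simp add: field_simps)

lemma d_bound: "(real a+1) * d a b \<le> 2^(a+b) / (fact a * fact b)"
proof -
  have c: "real ((a+b) choose a) \<le> 2^(a+b)" by (rule choose_le_real)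
  have e: "(real a+1) * d a b = real ((a+b) choose a) / (fact a * fact (b+1))"
    unfolding d_alt fact_plus1[of a] by (rule cancel_aux) auto
  have f: "real ((a+b) choose a) / (fact a * fact (b+1)) \<le> 2^(a+b) / (fact a * fact (b+1))"
    by (intro divide_right_mono c) simp
  have g: "2^(a+b) / (fact a * fact (b+1)) \<le> (2^(a+b) / (fact a * fact b) :: real)"
    by (intro divide_left_mono mult_left_mono mult_pos_pos fact_mono) auto
  show ?thesis using e f g by linarith
qed

lemma d_bound': "d a b \<le> 2^(a+b) / (fact a * fact b)"
proof -
  have "d a b \<le> (real a+1) * d a b" using d_nonneg[of a b] mult_le_cancel_right1[of "d a b" "real a + 1"] by (simp only: mult.commute) auto
  thus ?thesis using d_bound order_trans by blast
qed
lemma Mterm_shift: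
  "M_term t u (a+1, b+1) = complex_of_real (d a b) * (\<i> * t)^(a+1) * (\<i> * u)^(b+1)"
proof -
  have e: "a+1+(b+1)-2 = a+b" "a+1-1 = a" "b+1-1 = b" by simp_all
  show ?thesis
    unfolding M_term_def d_def prod.case e
    by (simp add: of_real_fact times_divide_eq_right mult_ac) (simp add: algebra_simps)
qed

lemma infsum_M_shift:
  "infsum (M_term t u) ({1..}\<times>{1..}) = infsum (\<lambda>(a,b). M_term t u (a+1,b+1)) UNIV"
proof -
  have bij: "bij_betw (\<lambda>(a,b). (a+1,b+1)) (UNIV::(nat\<times>nat) set) ({1..}\<times>{1..})"
    unfolding bij_betw_def
  proof (intro conjI)
    show "inj (\<lambda>(a::nat,b::nat). (a+1,b+1))" by (auto simp: inj_on_def)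
    show "(\<lambda>(a::nat,b::nat). (a+1,b+1)) ` UNIV = {1..}\<times>{1..}"
    proof (intro equalityI subsetI)
      fix p :: "nat \<times> nat" assume "p \<in> {1..}\<times>{1..}"
      then obtain a b where p: "p = (a,b)" "a \<ge> 1" "b \<ge> 1" by auto
      thus "p \<in> (\<lambda>(a::nat,b::nat). (a+1,b+1)) ` UNIV"
        by (intro rev_image_eqI[of "(a-1,b-1)"]) auto
    qed auto
  qed
  have "(\<lambda>x. M_term t u ((\<lambda>(a,b). (a+1,b+1)) x)) = (\<lambda>(a,b). M_term t u (a+1,b+1))"
    by (rule ext) (simp add: split_beta)
  thus ?thesis
    using infsum_reindex_bij_betw[OF bij, of "M_term t u"] by simp
qed

definition G :: "complex \<Rightarrow> complex \<Rightarrow> nat \<times> nat \<Rightarrow> complex" where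
  "G z y = (\<lambda>(a,b). complex_of_real (d a b) * z^(a+1) * y^(b+1))"

definition H :: "complex \<Rightarrow> complex \<Rightarrow> nat \<times> nat \<Rightarrow> complex" where
  "H z y = (\<lambda>(a,b). complex_of_real ((real a+1) * d a b) * z^a * y^(b+1))"

lemma alg1: "(2^(a+b) / (fa * fb)) * (X^(a+1) * Y^(b+1)) = X * Y * ((2*X)^a / fa) * ((2*Y)^b / (fb::real))"
  by (simp add: power_add power_mult_distrib)
lemma alg2: "(2^(a+b) / (fa * fb)) * (X^a * Y^(b+1)) = Y * ((2*X)^a / fa) * ((2*Y)^b / (fb::real))"
  by (simp add: power_add power_mult_distrib)

lemma G_summable: "G z y summable_on UNIV"
proof (rule fam_summable[where C="norm z * norm y" and A="2*norm z" and B="2*norm y"])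
  fix a b
  have "norm (G z y (a,b)) = d a b * (norm z^(a+1) * norm y^(b+1))"
    by (simp add: G_def norm_mult norm_power d_nonneg)
  also have "\<dots> \<le> (2^(a+b) / (fact a * fact b)) * (norm z^(a+1) * norm y^(b+1))"
    by (intro mult_right_mono d_bound') auto
  also have "\<dots> = norm z * norm y * ((2*norm z)^a / fact a) * ((2*norm y)^b / fact b)"
    by (rule alg1)
  finally show "norm (G z y (a,b)) \<le> norm z * norm y * ((2*norm z)^a / fact a) * ((2*norm y)^b / fact b)" .
qed auto

lemma cmod_nat1[simp]: "cmod (of_nat a + 1) = real a + 1"
  by (metis norm_of_nat of_nat_Suc Suc_eq_plus1 of_nat_1 of_nat_add)

lemma H_summable: "H z y summable_on UNIV"
proof (rule fam_summable[where C="norm y" and A="2*norm z" and B="2*norm y"])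
  fix a b
  have "norm (H z y (a,b)) = ((real a+1) * d a b) * (norm z^a * norm y^(b+1))"
    by (simp add: H_def norm_mult norm_power d_nonneg)
  also have "\<dots> \<le> (2^(a+b) / (fact a * fact b)) * (norm z^a * norm y^(b+1))"
    by (intro mult_right_mono d_bound) auto
  also have "\<dots> = norm y * ((2*norm z)^a / fact a) * ((2*norm y)^b / fact b)"
    by (rule alg2)
  finally show "norm (H z y (a,b)) \<le> norm y * ((2*norm z)^a / fact a) * ((2*norm y)^b / fact b)" .
qed auto

lemma infsum_M_G: "infsum (M_term t u) ({1..}\<times>{1..}) = infsum (G (\<i>*t) (\<i>*u)) UNIV"
  unfolding infsum_M_shift
proof (rule infsum_cong)
  fix p :: "nat \<times> nat"
  obtain a b where p: "p = (a,b)" by (cases p)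
  show "(\<lambda>(a,b). M_term t u (a+1,b+1)) p = G (\<i>*t) (\<i>*u) p"
    unfolding p G_def prod.case by (rule Mterm_shift)
qed

lemma sum_delta_half:
  "(\<Sum>l\<le>m. (if 2*l = m then f l else 0)) = (if even (m::nat) then f (m div 2) else (0::nat))"
proof -
  have "(\<Sum>l\<le>m. (if 2*l = m then f l else 0)) = (\<Sum>l\<le>m. (if l = m div 2 \<and> even m then f l else 0))"
    by (intro sum.cong) auto
  also have "\<dots> = (if even m then f (m div 2) else 0)"
    by (cases "even m") (auto simp: sum.delta)
  finally show ?thesis .
qed

lemma coeff_q_power:
  "coeff ((monom (1::nat) 2 + 1) ^ m) m = (if even m then m choose (m div 2) else 0)"
proof -
  have "(monom (1::nat) 2 + 1) ^ m = (\<Sum>l\<le>m. monom (of_nat (m choose l)) (2*l))"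
    by (subst binomial_ring) (simp add: monom_power of_nat_monom mult_monom mult.commute)
  hence "coeff ((monom (1::nat) 2 + 1) ^ m) m = (\<Sum>l\<le>m. (if 2*l = m then m choose l else 0))"
    by (simp add: coeff_sum)
  also have "\<dots> = (if even m then m choose (m div 2) else 0)" by (rule sum_delta_half)
  finally show ?thesis .
qed

lemma I1nat:
  "(\<Sum>i\<le>N. (N choose i) * 2^i * (if even (N-i) then (N-i) choose ((N-i) div 2) else 0)) = (2*N) choose N"
proof -
  have e: "[:1,1:] ^ (2*N) = (monom (2::nat) 1 + (monom 1 2 + 1)) ^ N"
  proof -
    have "[:1,1:]^2 = (monom (2::nat) 1 + (monom 1 2 + 1))"
      by (simp add: power2_eq_square monom_Suc monom_0 one_pCons numeral_2_eq_2)
    thus ?thesis by (simp add: power_mult)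
  qed
  have "(2*N) choose N = coeff ([:1,1::nat:] ^ (2*N)) N"
    by (subst coeff_linear_poly_power) auto
  also have "\<dots> = coeff (\<Sum>k\<le>N. monom (of_nat (N choose k) * 2^k) k * (monom 1 2 + 1) ^ (N - k)) N"
    unfolding e by (subst binomial_ring) (simp add: monom_power of_nat_monom mult_monom mult.assoc)
  also have "\<dots> = (\<Sum>k\<le>N. (N choose k) * 2^k * coeff ((monom 1 2 + 1) ^ (N - k)) (N-k))"
    unfolding coeff_sum by (intro sum.cong) (auto simp: coeff_monom_mult)
  also have "\<dots> = (\<Sum>i\<le>N. (N choose i) * 2^i * (if even (N-i) then (N-i) choose ((N-i) div 2) else 0))"
    by (simp only: coeff_q_power)
  finally show ?thesis ..
qed

definition pc :: "nat \<Rightarrow> real" where "pc N = real ((2*N) choose N) / fact N"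
definition kc :: "nat \<Rightarrow> real" where
  "kc N = (if N = 0 then 0 else real ((2*N-2) choose (N-1)) / fact N)"
definition qc :: "nat \<Rightarrow> real" where
  "qc N = (if even N then 1 / (fact (N div 2))^2 else 0)"

lemma alg_T1: "fN \<noteq> 0 \<Longrightarrow> fi \<noteq> 0 \<Longrightarrow> fm \<noteq> 0 \<Longrightarrow> fk \<noteq> 0 \<Longrightarrow>
   (fN / (fi * fm)) * t * (fm / (fk * fk)) / fN = t / fi * (1 / fk^2)" for fN fi fm fk t :: real
  by (simp add: field_simps power2_eq_square)

lemma T1:
  assumes "i \<le> N"
  shows "real ((N choose i) * 2^i * (if even (N-i) then (N-i) choose ((N-i) div 2) else 0)) / fact N
         = 2^i / fact i * qc (N-i)"
proof (cases "even (N-i)")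
  case True
  then obtain k where k: "N - i = 2*k" by (meson dvdE)
  have c1: "real (N choose i) = fact N / (fact i * fact (N-i))" using assms by (rule binomial_fact)
  have c2: "real ((2*k) choose k) = fact (2*k) / (fact k * fact k)"
    using binomial_fact[of k "2*k"] by (simp add: mult_2)
  have "real ((N choose i) * 2^i * (if even (N-i) then (N-i) choose ((N-i) div 2) else 0)) / fact N
     = (fact N / (fact i * fact (2*k))) * 2^i * (fact (2*k) / (fact k * fact k)) / fact N"
    using True c1 c2 by (simp add: k)
  also have "\<dots> = 2^i / fact i * (1 / (fact k)^2)" by (rule alg_T1) auto
  also have "\<dots> = 2^i / fact i * qc (N-i)" by (simp add: qc_def k)
  finally show ?thesis .
qed (simp add: qc_def)

lemma I1: "pc N = (\<Sum>i\<le>N. 2^i / fact i * qc (N-i))"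
proof -
  have "pc N = real (\<Sum>i\<le>N. (N choose i) * 2^i * (if even (N-i) then (N-i) choose ((N-i) div 2) else 0)) / fact N"
    unfolding pc_def I1nat ..
  also have "\<dots> = (\<Sum>i\<le>N. real ((N choose i) * 2^i * (if even (N-i) then (N-i) choose ((N-i) div 2) else 0)) / fact N)"
    by (simp only: of_nat_sum sum_divide_distrib)
  also have "\<dots> = (\<Sum>i\<le>N. 2^i / fact i * qc (N-i))"
    by (intro sum.cong refl T1) auto
  finally show ?thesis .
qed

lemma alg_V1: "x \<noteq> 0 \<Longrightarrow> fa \<noteq> 0 \<Longrightarrow> fb1 \<noteq> 0 \<Longrightarrow> fb \<noteq> 0 \<Longrightarrow> fN1 \<noteq> 0 \<Longrightarrow>
   x * (fN / (x * fa * fb1 * fa * fb)) = (fN1 / (fa * fb1)) * (fN / (fb * fa)) / fN1" for x fa fb1 fb fN fN1 :: real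
  by (simp add: field_simps)

lemma V1term:
  assumes "a \<le> N"
  shows "(real a + 1) * d a (N-a) = real ((N+1) choose a) * real (N choose (N-a)) / fact (N+1)"
proof -
  define b where "b = N - a"
  have N: "N = a + b" using assms by (simp add: b_def)
  have e1: "N+1-a = b+1" "N - (N-a) = a" using assms by (auto simp: b_def)
  have "a \<le> N+1" using assms by simp
  from binomial_fact[OF this] have c1: "real ((N+1) choose a) = fact (N+1) / (fact a * fact (b+1))"
    unfolding e1 .
  have "N - a \<le> N" by simp
  from binomial_fact[OF this] have c2: "real (N choose (N-a)) = fact N / (fact b * fact a)"
    unfolding e1 b_def .
  have "(real a + 1) * d a (N-a) = (real a + 1) * (fact N / ((real a + 1) * fact a * fact (b+1) * fact a * fact b))"
  proof -
    have ab: "a + b = N" using N by simp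
    show ?thesis unfolding d_def b_def[symmetric] ab fact_plus1[of a] ..
  qed
  also have "\<dots> = (fact (N+1) / (fact a * fact (b+1))) * (fact N / (fact b * fact a)) / fact (N+1)"
    by (rule alg_V1) auto
  finally show ?thesis unfolding c1 c2 .
qed

lemma choose_double_Suc: "(2*(N+1)) choose (N+1) = 2 * ((2*N+1) choose N)"
proof -
  have e: "2*(N+1) = Suc (2*N+1)" "N+1 = Suc N" by simp_all
  have "(2*(N+1)) choose (N+1) = ((2*N+1) choose N) + ((2*N+1) choose (Suc N))"
    by (subst e(1), subst e(2), rule binomial_Suc_Suc)
  also have "(2*N+1) choose (Suc N) = (2*N+1) choose N"
  proof -
    have "Suc N \<le> 2*N+1" by simp
    from binomial_symmetric[OF this] show ?thesis by simp
  qed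
  finally show ?thesis by simp
qed

lemma V1: "(\<Sum>a\<le>N. (real a + 1) * d a (N-a)) = pc (N+1) / 2"
proof -
  have "(\<Sum>a\<le>N. (real a + 1) * d a (N-a)) = (\<Sum>a\<le>N. real ((N+1) choose a) * real (N choose (N-a)) / fact (N+1))"
    by (intro sum.cong refl V1term) auto
  also have "\<dots> = real (\<Sum>a\<le>N. ((N+1) choose a) * (N choose (N-a))) / fact (N+1)"
    by (simp only: of_nat_sum of_nat_mult sum_divide_distrib)
  also have "(\<Sum>a\<le>N. ((N+1) choose a) * (N choose (N-a))) = (2*N+1) choose N"
    using vandermonde[of "N+1" N N] by (simp add: mult_2)
  also have "real ((2*N+1) choose N) / fact (N+1) = pc (N+1) / 2"
    unfolding pc_def choose_double_Suc by simp
  finally show ?thesis .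
qed

lemma alg_V2: "fa1 \<noteq> 0 \<Longrightarrow> fb1 \<noteq> 0 \<Longrightarrow> fa \<noteq> 0 \<Longrightarrow> fb \<noteq> 0 \<Longrightarrow> fN2 \<noteq> 0 \<Longrightarrow>
   fN / (fa1 * fb1 * fa * fb) = (fN2 / (fa1 * fb1)) * (fN / (fb * fa)) / fN2" for fa1 fb1 fb fa fN fN2 :: real
  by (simp add: field_simps)

lemma V2term:
  assumes "a \<le> N"
  shows "d a (N-a) = real ((N+2) choose (a+1)) * real (N choose (N-a)) / fact (N+2)"
proof -
  define b where "b = N - a"
  have ab: "a + b = N" using assms by (simp add: b_def)
  have e1: "N+2-(a+1) = b+1" "N - (N-a) = a" using assms by (auto simp: b_def)
  have "a+1 \<le> N+2" using assms by simp
  from binomial_fact[OF this] have c1: "real ((N+2) choose (a+1)) = fact (N+2) / (fact (a+1) * fact (b+1))"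
    unfolding e1 .
  have "N - a \<le> N" by simp
  from binomial_fact[OF this] have c2: "real (N choose (N-a)) = fact N / (fact b * fact a)"
    unfolding e1 b_def .
  have "d a (N-a) = fact N / (fact (a+1) * fact (b+1) * fact a * fact b)"
    unfolding d_def b_def[symmetric] ab ..
  also have "\<dots> = (fact (N+2) / (fact (a+1) * fact (b+1))) * (fact N / (fact b * fact a)) / fact (N+2)"
    by (rule alg_V2) auto
  finally show ?thesis unfolding c1 c2 .
qed

lemma V2: "(\<Sum>a\<le>N. d a (N-a)) = kc (N+2)"
proof -
  have "(\<Sum>a\<le>N. d a (N-a)) = (\<Sum>a\<le>N. real ((N+2) choose (a+1)) * real (N choose (N-a)) / fact (N+2))"
    by (intro sum.cong refl V2term) auto
  also have "\<dots> = real (\<Sum>a\<le>N. ((N+2) choose (Suc a)) * (N choose (N+1-Suc a))) / fact (N+2)"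
    by (simp only: of_nat_sum of_nat_mult sum_divide_distrib Suc_eq_plus1 diff_Suc_Suc) simp
  also have "(\<Sum>a\<le>N. ((N+2) choose (Suc a)) * (N choose (N+1-Suc a))) = (2*N+2) choose (N+1)"
  proof -
    have "(\<Sum>k\<le>Suc N. ((N+2) choose k) * (N choose (Suc N - k))) = (2*N+2) choose (N+1)"
      using vandermonde[of "N+2" N "N+1"] by (simp add: mult_2)
    thus ?thesis by (subst (asm) sum.atMost_Suc_shift) (simp del: binomial_Suc_Suc add: binomial_eq_0)
  qed
  also have "real ((2*N+2) choose (N+1)) / fact (N+2) = kc (N+2)"
  proof -
    have "2*(N+2)-2 = 2*N+2" "N+2-1 = N+1" by simp_all
    thus ?thesis unfolding kc_def by simp
  qed
  finally show ?thesis .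
qed

lemma alg_K: "x \<noteq> 0 \<Longrightarrow> F \<noteq> 0 \<Longrightarrow> x * c1 = (2*x - 1) * c \<Longrightarrow>
   c / (x * F) = 2 * (c / F) - x * (2 * c1 / (x * F)) / 2" for x F c c1 :: real
  by (simp add: field_simps)

lemma Kid: "kc (N+1) = 2 * pc N - (real N + 1) * pc (N+1) / 2"
proof -
  have k: "kc (N+1) = real ((2*N) choose N) / ((real N + 1) * fact N)"
    unfolding kc_def fact_plus1 by simp
  have p1: "pc (N+1) = 2 * real ((2*N+1) choose N) / ((real N + 1) * fact N)"
    unfolding pc_def choose_double_Suc fact_plus1 by simp
  have h: "(real N + 1) * real ((2*N+1) choose N) = (2 * (real N + 1) - 1) * real ((2*N) choose N)"
  proof -
    have "Suc N * (Suc (2*N) choose Suc N) = Suc (2*N) * ((2*N) choose N)" by (rule Suc_times_binomial)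
    moreover have "Suc (2*N) choose Suc N = (2*N+1) choose N"
    proof -
      have "Suc N \<le> 2*N+1" by simp
      from binomial_symmetric[OF this] show ?thesis by simp
    qed
    ultimately have "Suc N * ((2*N+1) choose N) = Suc (2*N) * ((2*N) choose N)" by simp
    hence "real (Suc N * ((2*N+1) choose N)) = real (Suc (2*N) * ((2*N) choose N))" by metis
    thus ?thesis by (simp add: algebra_simps)
  qed
  have p0: "pc N = real ((2*N) choose N) / fact N" by (simp add: pc_def)
  show ?thesis unfolding k p1 p0 by (rule alg_K) (use h in auto)
qed

lemma diffs_kc: "diffs kc n = pc n"
proof -
  have "diffs kc n = (real n + 1) * (real ((2*n) choose n) / ((real n + 1) * fact n))"
    unfolding diffs_def kc_def by (simp add: fact_plus1)
  thus ?thesis unfolding pc_def by simp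
qed

lemma pc_nonneg: "pc n \<ge> 0" by (simp add: pc_def)
lemma kc_nonneg: "kc n \<ge> 0" by (simp add: kc_def)
lemma qc_nonneg: "qc n \<ge> 0" by (simp add: qc_def)

lemma pc_bound: "pc n \<le> 4^n / fact n"
proof -
  have "real ((2*n) choose n) \<le> 2^(2*n)" by (rule choose_le_real)
  also have "(2::real)^(2*n) = 4^n" by (simp add: power_mult)
  finally show ?thesis unfolding pc_def by (intro divide_right_mono) auto
qed

lemma kc_bound: "kc n \<le> 4^n / fact n"
proof (cases "n = 0")
  case False
  have "real ((2*n-2) choose (n-1)) \<le> 2^(2*n-2)" by (rule choose_le_real)
  also have "(2::real)^(2*n-2) \<le> 2^(2*n)" by (intro power_increasing) auto
  also have "(2::real)^(2*n) = 4^n" by (simp add: power_mult)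
  finally show ?thesis using False by (simp add: kc_def divide_right_mono)
qed (simp add: kc_def)

lemma qc_bound: "qc n \<le> 2^n / fact n"
proof (cases "even n")
  case True
  then obtain k where k: "n = 2*k" by (meson dvdE)
  have c: "real ((2*k) choose k) = fact (2*k) / (fact k * fact k)"
    using binomial_fact[of k "2*k"] by (simp add: mult_2)
  have "real ((2*k) choose k) \<le> 2^(2*k)" by (rule choose_le_real)
  hence "fact (2*k) / (fact k * fact k) \<le> (2::real)^(2*k)" using c by simp
  hence "fact (2*k) \<le> (2::real)^(2*k) * (fact k * fact k)" by (simp add: divide_le_eq)
  hence "1 / (fact k)^2 \<le> (2::real)^(2*k) / fact (2*k)"
    by (simp add: divide_simps power2_eq_square mult_ac)
  thus ?thesis using k by (simp add: qc_def)
qed (simp add: qc_def)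

definition ps :: "(nat \<Rightarrow> real) \<Rightarrow> complex \<Rightarrow> complex" where
  "ps c z = (\<Sum>n. complex_of_real (c n) * z^n)"

lemma ps_summable_gen:
  assumes "\<And>n. \<bar>c n\<bar> \<le> B^n / fact n"
  shows "summable (\<lambda>n. norm (complex_of_real (c n) * z^n))"
proof (rule summable_comparison_test[OF _ se[of "B * norm z"]])
  show "\<exists>N. \<forall>n\<ge>N. norm (norm (complex_of_real (c n) * z^n)) \<le> (B * norm z)^n / fact n"
  proof (intro exI allI impI)
    fix n :: nat
    have "norm (norm (complex_of_real (c n) * z^n)) = \<bar>c n\<bar> * norm z^n" by (simp add: norm_mult norm_power)
    also have "\<dots> \<le> (B^n / fact n) * norm z^n" by (intro mult_right_mono assms) auto
    also have "\<dots> = (B * norm z)^n / fact n" by (simp add: power_mult_distrib)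
    finally show "norm (norm (complex_of_real (c n) * z^n)) \<le> (B * norm z)^n / fact n" .
  qed
qed

lemma pc_abs: "\<bar>pc n\<bar> \<le> 4^n / fact n" unfolding abs_of_nonneg[OF pc_nonneg] by (rule pc_bound)
lemma kc_abs: "\<bar>kc n\<bar> \<le> 4^n / fact n" unfolding abs_of_nonneg[OF kc_nonneg] by (rule kc_bound)
lemma qc_abs: "\<bar>qc n\<bar> \<le> 2^n / fact n" unfolding abs_of_nonneg[OF qc_nonneg] by (rule qc_bound)

lemma summable_pc: "summable (\<lambda>n. complex_of_real (pc n) * z^n)"
  by (rule summable_norm_cancel[OF ps_summable_gen[OF pc_abs]])
lemma summable_kc: "summable (\<lambda>n. complex_of_real (kc n) * z^n)"
  by (rule summable_norm_cancel[OF ps_summable_gen[OF kc_abs]])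
lemma summable_qc: "summable (\<lambda>n. complex_of_real (qc n) * z^n)"
  by (rule summable_norm_cancel[OF ps_summable_gen[OF qc_abs]])

lemma diffs_of_real: "diffs (\<lambda>n. complex_of_real (c n)) = (\<lambda>n. complex_of_real (diffs c n))"
  by (simp add: diffs_def fun_eq_iff)

lemma ps_deriv:
  assumes "\<And>z. summable (\<lambda>n. complex_of_real (c n) * z^n)"
  shows "(ps c has_field_derivative ps (diffs c) z) (at z)"
proof -
  have "((\<lambda>z. \<Sum>n. complex_of_real (c n) * z^n) has_field_derivative
          (\<Sum>n. diffs (\<lambda>n. complex_of_real (c n)) n * z^n)) (at z)"
    by (rule termdiffs_strong_converges_everywhere) (rule assms)
  thus ?thesis unfolding ps_def[abs_def] diffs_of_real .
qed

lemma ps_diffs_summable: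
  assumes "\<And>z. summable (\<lambda>n. complex_of_real (c n) * z^n)"
  shows "summable (\<lambda>n. complex_of_real (diffs c n) * z^n)"
proof -
  have "summable (\<lambda>n. diffs (\<lambda>n. complex_of_real (c n)) n * z^n)"
    by (rule termdiff_converges_all) (rule assms)
  thus ?thesis unfolding diffs_of_real .
qed

lemma rearr: "A * x * (B * y) = A * B * (x * (y::complex))" by (simp add: mult_ac)

lemma P_eq: "ps pc z = exp (2*z) * ps qc z"
proof -
  define a where "a n = complex_of_real (2^n / fact n) * z^n" for n
  define b where "b n = complex_of_real (qc n) * z^n" for n
  have ea: "exp (2*z) = (\<Sum>n. a n)"
  proof -
    have "(\<lambda>n. (2*z)^n /\<^sub>R fact n) sums exp (2*z)" by (rule exp_converges)
    moreover have "(\<lambda>n. (2*z)^n /\<^sub>R fact n) = a"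
      by (auto simp: a_def fun_eq_iff scaleR_conv_of_real power_mult_distrib divide_inverse mult_ac)
    ultimately show ?thesis by (simp add: sums_iff)
  qed
  have sa: "summable (\<lambda>n. norm (a n))"
    unfolding a_def by (rule ps_summable_gen[of _ 2]) simp
  have sb: "summable (\<lambda>n. norm (b n))"
    unfolding b_def by (rule ps_summable_gen[OF qc_abs])
  have "exp (2*z) * ps qc z = (\<Sum>k. \<Sum>i\<le>k. a i * b (k - i))"
    unfolding ea ps_def b_def[symmetric] by (rule Cauchy_product[OF sa sb])
  also have "\<dots> = (\<Sum>k. complex_of_real (pc k) * z^k)"
  proof (rule suminf_cong)
    fix k
    have "(\<Sum>i\<le>k. a i * b (k - i)) = (\<Sum>i\<le>k. complex_of_real (2^i / fact i * qc (k-i)) * z^k)"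
    proof (intro sum.cong refl)
      fix i assume "i \<in> {..k}"
      hence zk: "z^k = z^i * z^(k-i)" by (simp add: power_add[symmetric])
      show "a i * b (k - i) = complex_of_real (2^i / fact i * qc (k-i)) * z^k"
        unfolding a_def b_def zk of_real_mult by (rule rearr)
    qed
    also have "\<dots> = complex_of_real (pc k) * z^k"
      by (simp only: I1[of k] of_real_sum sum_distrib_right)
    finally show "(\<Sum>i\<le>k. a i * b (k - i)) = complex_of_real (pc k) * z^k" .
  qed
  finally show ?thesis unfolding ps_def by simp
qed

lemma J0_sum: "BesselJ0 (2*u) = (\<Sum>k. (-1)^k * u^(2*k) / (fact k)^2)"
  unfolding BesselJ0_def by simp

lemma J0_summable: "summable (\<lambda>k. (-1)^k * u^(2*k) / (fact k)^2 :: real)"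
proof (rule summable_comparison_test[OF _ se[of "u^2"]])
  show "\<exists>N. \<forall>n\<ge>N. norm ((-1)^n * u^(2*n) / (fact n)^2) \<le> (u^2)^n / fact n"
  proof (intro exI allI impI)
    fix n :: nat
    have f1: "(fact n :: real) \<le> (fact n)^2"
      by (simp add: power2_eq_square)
    have "norm ((-1)^n * u^(2*n) / (fact n)^2) = (u^2)^n / (fact n)^2"
      by (simp add: abs_mult power_abs power_mult)
    also have "\<dots> \<le> (u^2)^n / fact n"
      by (intro divide_left_mono f1) auto
    finally show "norm ((-1)^n * u^(2*n) / (fact n)^2) \<le> (u^2)^n / fact n" .
  qed
qed

lemma Q_iu: "ps qc (\<i> * complex_of_real u) = complex_of_real (BesselJ0 (2*u))"
proof -
  define f where "f n = complex_of_real (qc n) * (\<i> * complex_of_real u)^n" for n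
  have "ps qc (\<i> * complex_of_real u) = suminf f" unfolding ps_def f_def ..
  also have "\<dots> = suminf (\<lambda>k. f (2*k))"
  proof (rule suminf_mono_reindex[symmetric])
    show "strict_mono (\<lambda>k::nat. 2*k)" by (auto simp: strict_mono_def)
    fix n assume "n \<notin> range (\<lambda>k::nat. 2*k)"
    hence "odd n" by (metis evenE rangeI)
    thus "f n = 0" by (simp add: f_def qc_def)
  qed
  also have "\<dots> = (\<Sum>k. complex_of_real ((-1)^k * u^(2*k) / (fact k)^2))"
  proof (rule suminf_cong)
    fix k
    have "(\<i> * complex_of_real u)^(2*k) = complex_of_real ((-1)^k * u^(2*k))"
      by (simp add: power_mult power_mult_distrib power_minus[of "(complex_of_real u)^2"])
    thus "f (2*k) = complex_of_real ((-1)^k * u^(2*k) / (fact k)^2)"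
      by (simp add: f_def qc_def)
  qed
  also have "\<dots> = complex_of_real (\<Sum>k. (-1)^k * u^(2*k) / (fact k)^2)"
    by (rule suminf_of_real[symmetric, OF J0_summable])
  finally show ?thesis unfolding J0_sum .
qed


definition \<beta> :: "complex \<Rightarrow> nat \<Rightarrow> complex" where
  "\<beta> y a = infsum (\<lambda>b. complex_of_real (d a b) * y^(b+1)) UNIV"
definition \<alpha> :: "complex \<Rightarrow> nat \<Rightarrow> complex" where
  "\<alpha> y n = (if n = 0 then 0 else \<beta> y (n-1))"
definition F :: "complex \<Rightarrow> complex \<Rightarrow> complex" where
  "F y z = (\<Sum>n. \<alpha> y n * z^n)"
definition F' :: "complex \<Rightarrow> complex \<Rightarrow> complex" where
  "F' y z = (\<Sum>n. diffs (\<alpha> y) n * z^n)"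

lemma G_rows: "(\<lambda>a. z^(a+1) * \<beta> y a) sums infsum (G z y) UNIV"
proof -
  have "(\<lambda>a. infsum (\<lambda>b. G z y (a,b)) UNIV) sums infsum (G z y) UNIV"
    by (rule rows_sums(1)[OF G_summable])
  moreover have "infsum (\<lambda>b. G z y (a,b)) UNIV = z^(a+1) * \<beta> y a" for a
  proof -
    have "infsum (\<lambda>b. G z y (a,b)) UNIV = infsum (\<lambda>b. z^(a+1) * (complex_of_real (d a b) * y^(b+1))) UNIV"
      by (rule infsum_cong) (simp add: G_def mult_ac)
    also have "\<dots> = z^(a+1) * \<beta> y a" unfolding \<beta>_def by (rule infsum_cmult_right')
    finally show ?thesis .
  qed
  ultimately show ?thesis by simp
qed

lemma F_sums: "(\<lambda>n. \<alpha> y n * z^n) sums infsum (G z y) UNIV"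
proof -
  have "(\<lambda>n. \<alpha> y (Suc n) * z^(Suc n)) sums infsum (G z y) UNIV"
    using G_rows[of z y] by (simp add: \<alpha>_def mult_ac)
  hence "(\<lambda>n. \<alpha> y n * z^n) sums (infsum (G z y) UNIV + \<alpha> y 0 * z^0)"
    by (subst (asm) sums_Suc_iff)
  thus ?thesis by (simp add: \<alpha>_def)
qed

lemma F_eq: "F y z = infsum (G z y) UNIV"
  unfolding F_def using F_sums by (rule sums_unique[symmetric])

lemma H_rows: "(\<lambda>a. diffs (\<alpha> y) a * z^a) sums infsum (H z y) UNIV"
proof -
  have "(\<lambda>a. infsum (\<lambda>b. H z y (a,b)) UNIV) sums infsum (H z y) UNIV"
    by (rule rows_sums(1)[OF H_summable])
  moreover have "infsum (\<lambda>b. H z y (a,b)) UNIV = diffs (\<alpha> y) a * z^a" for a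
  proof -
    have "infsum (\<lambda>b. H z y (a,b)) UNIV = infsum (\<lambda>b. (of_nat (Suc a) * z^a) * (complex_of_real (d a b) * y^(b+1))) UNIV"
      by (rule infsum_cong) (simp add: H_def mult_ac)
    also have "\<dots> = (of_nat (Suc a) * z^a) * \<beta> y a" unfolding \<beta>_def by (rule infsum_cmult_right')
    also have "\<dots> = diffs (\<alpha> y) a * z^a" by (simp add: diffs_def \<alpha>_def mult_ac)
    finally show ?thesis .
  qed
  ultimately show ?thesis by simp
qed

lemma F'_eq: "F' y z = infsum (H z y) UNIV"
  unfolding F'_def using H_rows by (rule sums_unique[symmetric])

lemma F_deriv: "(F y has_field_derivative F' y z) (at z)"
proof -
  have "\<And>w. summable (\<lambda>n. \<alpha> y n * w^n)" using F_sums sums_summable by blast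
  from termdiffs_strong_converges_everywhere[of "\<alpha> y", OF this]
  show ?thesis unfolding F_def[abs_def] F'_def .
qed

lemma M_F: "M t u = complex_of_real t + complex_of_real u - 2 * \<i> * F (\<i> * u) (\<i> * t)"
  unfolding M_def infsum_M_G F_eq ..

lemma H_diag: "ps pc x = 1 + 2 * infsum (H x x) UNIV"
proof -
  have "(\<lambda>N. \<Sum>a\<le>N. H x x (a, N-a)) sums infsum (H x x) UNIV"
    by (rule diag_sums[OF H_summable])
  moreover have "(\<Sum>a\<le>N. H x x (a, N-a)) = complex_of_real (pc (N+1) / 2) * x^(N+1)" for N
  proof -
    have "(\<Sum>a\<le>N. H x x (a, N-a)) = (\<Sum>a\<le>N. complex_of_real ((real a + 1) * d a (N-a)) * x^(N+1))"
    proof (intro sum.cong refl)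
      fix a assume "a \<in> {..N}"
      hence "x^a * x^(N-a+1) = x^(N+1)" by (simp add: power_add[symmetric])
      thus "H x x (a, N-a) = complex_of_real ((real a + 1) * d a (N-a)) * x^(N+1)"
        unfolding H_def prod.case by (simp only: mult.assoc)
    qed
    also have "\<dots> = complex_of_real (pc (N+1) / 2) * x^(N+1)"
      by (simp only: V1[of N, symmetric] of_real_sum sum_distrib_right)
    finally show ?thesis .
  qed
  ultimately have "(\<lambda>N. complex_of_real (pc (N+1) / 2) * x^(N+1)) sums infsum (H x x) UNIV" by simp
  hence "(\<lambda>N. 2 * (complex_of_real (pc (N+1) / 2) * x^(N+1))) sums (2 * infsum (H x x) UNIV)"
    by (rule sums_mult)
  hence "(\<lambda>N. complex_of_real (pc (Suc N)) * x^(Suc N)) sums (2 * infsum (H x x) UNIV)"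
    by simp
  hence "(\<lambda>n. complex_of_real (pc n) * x^n) sums (2 * infsum (H x x) UNIV + complex_of_real (pc 0) * x^0)"
    by (subst (asm) sums_Suc_iff)
  hence "(\<lambda>n. complex_of_real (pc n) * x^n) sums (1 + 2 * infsum (H x x) UNIV)"
    by (simp add: pc_def add.commute)
  thus ?thesis unfolding ps_def by (rule sums_unique[symmetric])
qed

lemma G_diag: "ps kc x = x + infsum (G x x) UNIV"
proof -
  have "(\<lambda>N. \<Sum>a\<le>N. G x x (a, N-a)) sums infsum (G x x) UNIV"
    by (rule diag_sums[OF G_summable])
  moreover have "(\<Sum>a\<le>N. G x x (a, N-a)) = complex_of_real (kc (N+2)) * x^(N+2)" for N
  proof -
    have "(\<Sum>a\<le>N. G x x (a, N-a)) = (\<Sum>a\<le>N. complex_of_real (d a (N-a)) * x^(N+2))"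
    proof (intro sum.cong refl)
      fix a assume "a \<in> {..N}"
      hence "x^(a+1) * x^(N-a+1) = x^(N+2)" by (simp add: power_add[symmetric])
      thus "G x x (a, N-a) = complex_of_real (d a (N-a)) * x^(N+2)"
        unfolding G_def prod.case by (simp only: mult.assoc)
    qed
    also have "\<dots> = complex_of_real (kc (N+2)) * x^(N+2)"
      by (simp only: V2[of N, symmetric] of_real_sum sum_distrib_right)
    finally show ?thesis .
  qed
  ultimately have "(\<lambda>N. complex_of_real (kc (Suc (Suc N))) * x^(Suc (Suc N))) sums infsum (G x x) UNIV"
    by (simp add: numeral_2_eq_2)
  hence "(\<lambda>N. complex_of_real (kc (Suc N)) * x^(Suc N)) sums (infsum (G x x) UNIV + complex_of_real (kc 1) * x^1)"
    by (subst (asm) sums_Suc_iff) simp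
  hence "(\<lambda>n. complex_of_real (kc n) * x^n) sums (infsum (G x x) UNIV + complex_of_real (kc 1) * x^1 + complex_of_real (kc 0) * x^0)"
    by (subst (asm) sums_Suc_iff)
  hence "(\<lambda>n. complex_of_real (kc n) * x^n) sums (x + infsum (G x x) UNIV)"
    by (simp add: kc_def add.commute)
  thus ?thesis unfolding ps_def by (rule sums_unique[symmetric])
qed


lemma chain_i:
  assumes "\<And>w. (f has_field_derivative f' w) (at w)"
  shows "((\<lambda>x. f (\<i> * x)) has_field_derivative f' (\<i> * z) * \<i>) (at z)"
proof -
  have "((\<lambda>x. \<i> * x) has_field_derivative \<i>) (at z)" by (intro derivative_eq_intros) auto
  from DERIV_chain2[OF assms this] show ?thesis .
qed

lemma M_deriv1: "((\<lambda>t. M t u) has_vector_derivative ps pc (\<i> * complex_of_real u)) (at u)"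
proof -
  define y where "y = \<i> * complex_of_real u"
  define \<Phi> where "\<Phi> z = z + complex_of_real u - 2 * \<i> * F y (\<i> * z)" for z
  have d: "(\<Phi> has_field_derivative (1 - 2 * \<i> * (F' y (\<i> * complex_of_real u) * \<i>))) (at (complex_of_real u))"
  proof -
    have c: "((\<lambda>x. F y (\<i> * x)) has_field_derivative F' y (\<i> * complex_of_real u) * \<i>) (at (complex_of_real u))"
      by (rule chain_i[OF F_deriv])
    have c1: "((\<lambda>z. z + complex_of_real u) has_field_derivative 1) (at (complex_of_real u))"
      by (intro derivative_eq_intros) auto
    have c2: "((\<lambda>z. 2 * \<i> * F y (\<i> * z)) has_field_derivative 2 * \<i> * (F' y (\<i> * complex_of_real u) * \<i>)) (at (complex_of_real u))"
      by (rule DERIV_cmult[OF c])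
    show ?thesis unfolding \<Phi>_def[abs_def] by (rule DERIV_diff[OF c1 c2])
  qed
  have "((\<lambda>t. \<Phi> (complex_of_real t)) has_vector_derivative (1 - 2 * \<i> * (F' y (\<i> * complex_of_real u) * \<i>))) (at u)"
    by (rule has_vector_derivative_real_field[OF d])
  moreover have "(\<lambda>t. \<Phi> (complex_of_real t)) = (\<lambda>t. M t u)"
    by (auto simp: fun_eq_iff \<Phi>_def M_F y_def)
  moreover have "1 - 2 * \<i> * (F' y (\<i> * complex_of_real u) * \<i>) = ps pc y"
  proof -
    have e: "1 - 2 * \<i> * (w * \<i>) = 1 + 2 * w" for w :: complex
    proof -
      have "2 * \<i> * (w * \<i>) = 2 * w * (\<i> * \<i>)" by (simp only: mult_ac)
      also have "\<dots> = - (2 * w)" by simp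
      finally show ?thesis by simp
    qed
    have "ps pc y = 1 + 2 * F' y y" unfolding H_diag F'_eq ..
    thus ?thesis unfolding e y_def by simp
  qed
  ultimately show ?thesis unfolding y_def by simp
qed

lemma d_sym: "d a b = d b a"
  unfolding d_def by (simp add: add.commute mult_ac)

lemma G_swap: "G z y (a,b) = G y z (b,a)"
  unfolding G_def by (simp add: d_sym mult_ac)

lemma M_sym: "M u t = M t u"
proof -
  have bij: "bij_betw prod.swap (UNIV::(nat\<times>nat) set) UNIV"
    by (rule bij_betw_byWitness[where f'=prod.swap]) auto
  have "infsum (G (\<i> * complex_of_real u) (\<i> * complex_of_real t)) UNIV
      = infsum (\<lambda>p. G (\<i> * complex_of_real t) (\<i> * complex_of_real u) (prod.swap p)) UNIV"
    by (rule infsum_cong) (auto simp: G_swap[of "\<i> * complex_of_real u"])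
  also have "\<dots> = infsum (G (\<i> * complex_of_real t) (\<i> * complex_of_real u)) UNIV"
    by (rule infsum_reindex_bij_betw[OF bij])
  finally show ?thesis unfolding M_def infsum_M_G by (simp add: add.commute)
qed

lemma M_diag: "M u u = - 2 * \<i> * ps kc (\<i> * complex_of_real u)"
proof -
  have "M u u = 2 * complex_of_real u - 2 * \<i> * infsum (G (\<i> * complex_of_real u) (\<i> * complex_of_real u)) UNIV"
    unfolding M_def infsum_M_G by simp
  also have "infsum (G (\<i> * complex_of_real u) (\<i> * complex_of_real u)) UNIV = ps kc (\<i> * complex_of_real u) - \<i> * complex_of_real u"
    unfolding G_diag by simp
  finally show ?thesis by (simp add: algebra_simps)
qed

lemma diffs_kc_fun: "diffs kc = pc" by (rule ext) (rule diffs_kc)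

lemma M_diag_deriv: "((\<lambda>t. M t t) has_vector_derivative 2 * ps pc (\<i> * complex_of_real u)) (at u)"
proof -
  have c: "((\<lambda>x. ps kc (\<i> * x)) has_field_derivative ps pc (\<i> * complex_of_real u) * \<i>) (at (complex_of_real u))"
    by (rule chain_i[OF ps_deriv[OF summable_kc, unfolded diffs_kc_fun]])
  have d: "((\<lambda>z. - 2 * \<i> * ps kc (\<i> * z)) has_field_derivative (- 2 * \<i> * (ps pc (\<i> * complex_of_real u) * \<i>))) (at (complex_of_real u))"
    by (rule DERIV_cmult[OF c])
  have A: "((\<lambda>t. - 2 * \<i> * ps kc (\<i> * complex_of_real t)) has_vector_derivative (- 2 * \<i> * (ps pc (\<i> * complex_of_real u) * \<i>))) (at u)"
    by (rule has_vector_derivative_real_field[OF d])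
  have eq: "- 2 * \<i> * (w * \<i>) = 2 * w" for w :: complex
  proof -
    have "- 2 * \<i> * (w * \<i>) = - 2 * w * (\<i> * \<i>)" by (simp only: mult_ac)
    also have "\<dots> = 2 * w" by simp
    finally show ?thesis .
  qed
  have fe: "(\<lambda>t. - 2 * \<i> * ps kc (\<i> * complex_of_real t)) = (\<lambda>t. M t t)"
    by (rule ext) (rule M_diag[symmetric])
  show ?thesis using A unfolding eq fe .
qed

lemma P'_eq: "ps (diffs pc) z = 2 * ps pc z + exp (2*z) * ps (diffs qc) z"
proof -
  have d1: "(ps pc has_field_derivative ps (diffs pc) z) (at z)"
    by (rule ps_deriv[OF summable_pc])
  have fe: "ps pc = (\<lambda>z. exp (2*z) * ps qc z)" by (rule ext) (rule P_eq)
  have e: "((\<lambda>z. exp (2*z)) has_field_derivative exp (2*z) * 2) (at z)"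
    by (intro derivative_eq_intros) auto
  have q: "(ps qc has_field_derivative ps (diffs qc) z) (at z)"
    by (rule ps_deriv[OF summable_qc])
  have d2: "(ps pc has_field_derivative (exp (2*z) * ps (diffs qc) z + exp (2*z) * 2 * ps qc z)) (at z)"
    unfolding fe by (rule DERIV_mult'[OF e q])
  have "ps (diffs pc) z = exp (2*z) * ps (diffs qc) z + exp (2*z) * 2 * ps qc z"
    by (rule DERIV_unique[OF d1 d2])
  thus ?thesis by (simp add: P_eq[of z] algebra_simps)
qed

lemma diffs_pc_summable: "summable (\<lambda>n. complex_of_real (diffs pc n) * z^n)"
  by (rule ps_diffs_summable[OF summable_pc])

lemma K_eq: "ps kc z = z * (2 * ps pc z - ps (diffs pc) z / 2)"
proof -
  have s1: "(\<lambda>n. complex_of_real (pc n) * z^n) sums ps pc z"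
    unfolding ps_def by (rule summable_sums[OF summable_pc])
  have s2: "(\<lambda>n. complex_of_real (diffs pc n) * z^n) sums ps (diffs pc) z"
    unfolding ps_def by (rule summable_sums[OF diffs_pc_summable])
  have "(\<lambda>n. z * (2 * (complex_of_real (pc n) * z^n) - complex_of_real (diffs pc n) * z^n / 2))
          sums (z * (2 * ps pc z - ps (diffs pc) z / 2))"
    by (intro sums_mult sums_diff sums_divide s1 s2)
  moreover have "z * (2 * (complex_of_real (pc n) * z^n) - complex_of_real (diffs pc n) * z^n / 2)
        = complex_of_real (kc (Suc n)) * z^(Suc n)" for n
  proof -
    have "kc (Suc n) = 2 * pc n - diffs pc n / 2"
      using Kid[of n] by (simp add: diffs_def)
    hence kk: "complex_of_real (kc (Suc n)) = 2 * complex_of_real (pc n) - complex_of_real (diffs pc n) / 2"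
      by simp
    show ?thesis unfolding kk by (simp add: algebra_simps)
  qed
  ultimately have "(\<lambda>n. complex_of_real (kc (Suc n)) * z^(Suc n)) sums (z * (2 * ps pc z - ps (diffs pc) z / 2))"
    by simp
  hence "(\<lambda>n. complex_of_real (kc n) * z^n) sums (z * (2 * ps pc z - ps (diffs pc) z / 2) + complex_of_real (kc 0) * z^0)"
    by (subst (asm) sums_Suc_iff)
  hence "(\<lambda>n. complex_of_real (kc n) * z^n) sums (z * (2 * ps pc z - ps (diffs pc) z / 2))"
    by (simp add: kc_def)
  thus ?thesis unfolding ps_def by (rule sums_unique[symmetric])
qed

lemma Re_iu_odd: "odd n \<Longrightarrow> Re ((\<i> * complex_of_real u)^n) = 0"
proof -
  assume "odd n"
  then obtain k where k: "n = Suc (2*k)" by (metis oddE Suc_eq_plus1)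
  have a: "(\<i> * complex_of_real u)^n = (\<i> * complex_of_real u) * ((\<i> * complex_of_real u)^2)^k"
    unfolding k power_Suc power_mult ..
  have b: "(\<i> * complex_of_real u)^2 = complex_of_real (-(u*u))"
  proof -
    have "(\<i> * complex_of_real u)^2 = (\<i> * \<i>) * (complex_of_real u * complex_of_real u)"
      unfolding power2_eq_square by (simp only: mult_ac)
    thus ?thesis by simp
  qed
  have "(\<i> * complex_of_real u)^n = \<i> * complex_of_real ((-(u*u))^k * u)"
    unfolding a b by (simp add: mult_ac)
  thus ?thesis by simp
qed

lemma Re_Q'_iu: "Re (ps (diffs qc) (\<i> * complex_of_real u)) = 0"
proof -
  have s: "summable (\<lambda>n. complex_of_real (diffs qc n) * (\<i> * complex_of_real u)^n)"
    by (rule ps_diffs_summable[OF summable_qc])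
  have "Re (ps (diffs qc) (\<i> * complex_of_real u)) = (\<Sum>n. Re (complex_of_real (diffs qc n) * (\<i> * complex_of_real u)^n))"
    unfolding ps_def by (rule Re_suminf[OF s])
  also have "\<dots> = (\<Sum>n. 0)"
  proof (rule suminf_cong)
    fix n
    show "Re (complex_of_real (diffs qc n) * (\<i> * complex_of_real u)^n) = 0"
    proof (cases "even n")
      case True
      thus ?thesis by (simp add: diffs_def qc_def)
    next
      case False
      thus ?thesis using Re_iu_odd[of n u] by simp
    qed
  qed
  finally show ?thesis by simp
qed


lemma i_rule: "- 2 * \<i> * (\<i> * w) = 2 * w"
proof -
  have "- 2 * \<i> * (\<i> * w) = - 2 * w * (\<i> * \<i>)" by (simp only: mult_ac)
  also have "\<dots> = 2 * w" by simp
  finally show ?thesis .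
qed

lemma M_closed:
  "M u u = complex_of_real (2*u) * (exp (2 * (\<i> * complex_of_real u)) *
      (ps qc (\<i> * complex_of_real u) - ps (diffs qc) (\<i> * complex_of_real u) / 2))"
proof -
  define x where "x = \<i> * complex_of_real u"
  define E where "E = exp (2*x)"
  have k: "ps kc x = x * (E * (ps qc x - ps (diffs qc) x / 2))"
    unfolding K_eq P'_eq P_eq E_def by (simp add: field_simps)
  have "M u u = - 2 * \<i> * (\<i> * (complex_of_real u * (E * (ps qc x - ps (diffs qc) x / 2))))"
    unfolding M_diag x_def[symmetric] k by (simp add: x_def mult.assoc)
  also have "\<dots> = 2 * (complex_of_real u * (E * (ps qc x - ps (diffs qc) x / 2)))"
    by (rule i_rule)
  finally show ?thesis unfolding E_def x_def by simp
qed

lemma Re_cnj_M: "Re (cnj (M u u) * exp (2 * (\<i> * complex_of_real u))) = 2 * u * BesselJ0 (2*u)"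
proof -
  define E where "E = exp (2 * (\<i> * complex_of_real u))"
  define W where "W = ps qc (\<i> * complex_of_real u) - ps (diffs qc) (\<i> * complex_of_real u) / 2"
  have cE: "cnj E * E = 1"
    unfolding E_def exp_cnj by (simp add: exp_add[symmetric])
  have "cnj (M u u) * E = complex_of_real (2*u) * cnj W * (cnj E * E)"
    unfolding M_closed E_def[symmetric] W_def[symmetric] by (simp add: mult_ac)
  also have "\<dots> = complex_of_real (2*u) * cnj W" unfolding cE by simp
  finally have "Re (cnj (M u u) * E) = 2 * u * Re W" by simp
  also have "Re W = BesselJ0 (2*u)"
    unfolding W_def using Re_Q'_iu[of u] Q_iu[of u] by simp
  finally show ?thesis unfolding E_def .
qed

lemma Re_ofr: "Re (complex_of_real r * w) = r * Re w" by simp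

lemma norm_sq_deriv:
  "((\<lambda>t. (cmod (M t t))^2) has_real_derivative 8 * t * (BesselJ0 (2*t))^2) (at t)"
proof -
  define m where "m t = M t t" for t
  define m' where "m' = 2 * ps pc (\<i> * complex_of_real t)"
  have dm: "(m has_vector_derivative m') (at t)"
    unfolding m_def[abs_def] m'_def by (rule M_diag_deriv)
  have m'_eq: "m' = 2 * exp (2 * (\<i> * complex_of_real t)) * complex_of_real (BesselJ0 (2*t))"
    unfolding m'_def P_eq Q_iu by (simp add: mult_ac)
  have dRe: "((\<lambda>t. Re (m t)) has_real_derivative Re m') (at t)"
    by (rule has_field_derivative_Re[OF dm])
  have dIm: "((\<lambda>t. Im (m t)) has_real_derivative Im m') (at t)"
    by (rule has_field_derivative_Im[OF dm])
  have d: "((\<lambda>t. (Re (m t))^2 + (Im (m t))^2) has_real_derivative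
           (2 * Re (m t) * Re m' + 2 * Im (m t) * Im m')) (at t)"
  proof -
    have a: "((\<lambda>t. Re (m t) * Re (m t)) has_real_derivative Re (m t) * Re m' + Re m' * Re (m t)) (at t)"
      by (rule DERIV_mult'[OF dRe dRe])
    have b: "((\<lambda>t. Im (m t) * Im (m t)) has_real_derivative Im (m t) * Im m' + Im m' * Im (m t)) (at t)"
      by (rule DERIV_mult'[OF dIm dIm])
    have c: "((\<lambda>t. Re (m t) * Re (m t) + Im (m t) * Im (m t)) has_real_derivative
             (Re (m t) * Re m' + Re m' * Re (m t)) + (Im (m t) * Im m' + Im m' * Im (m t))) (at t)"
      by (rule DERIV_add[OF a b])
    show ?thesis using c by (simp add: power2_eq_square algebra_simps)
  qed
  have "2 * Re (m t) * Re m' + 2 * Im (m t) * Im m' = 2 * Re (cnj (m t) * m')" by simp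
  also have "cnj (m t) * m' = complex_of_real (2 * BesselJ0 (2*t)) * (cnj (m t) * exp (2 * (\<i> * complex_of_real t)))"
    unfolding m'_eq by (simp add: mult_ac)
  also have "2 * Re \<dots> = 8 * t * (BesselJ0 (2*t))^2"
    unfolding m_def Re_ofr using Re_cnj_M[of t] by (simp add: power2_eq_square)
  finally have e: "2 * Re (m t) * Re m' + 2 * Im (m t) * Im m' = 8 * t * (BesselJ0 (2*t))^2" .
  have fe: "(\<lambda>t. (Re (m t))^2 + (Im (m t))^2) = (\<lambda>t. (cmod (M t t))^2)"
    by (rule ext) (simp add: cmod_power2 m_def)
  show ?thesis using d unfolding e fe .
qed

lemma norm_mono:
  assumes "0 \<le> a" "a \<le> b"
  shows "cmod (M a a / (2 * \<i>)) \<le> cmod (M b b / (2 * \<i>))"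
proof -
  have "(cmod (M a a))^2 \<le> (cmod (M b b))^2"
  proof (rule DERIV_nonneg_imp_nondecreasing[OF assms(2)])
    fix x assume "a \<le> x" "x \<le> b"
    hence "x \<ge> 0" using assms by simp
    thus "\<exists>y. ((\<lambda>t. (cmod (M t t))^2) has_real_derivative y) (at x) \<and> 0 \<le> y"
      using norm_sq_deriv[of x] by (intro exI[of _ "8 * x * (BesselJ0 (2*x))^2"]) auto
  qed
  hence "cmod (M a a) \<le> cmod (M b b)" by (rule power2_le_imp_le) simp
  thus ?thesis by (simp add: norm_divide norm_mult divide_right_mono)
qed

lemma num1: "(\<Sum>i<7. (-1)^i * ((1201/1000::real)^(2*i+2) / (fact (i+1))^2)) < 1"
  by (simp add: eval_nat_numeral fact_Suc)

lemma num2: "(\<Sum>i<6. (-1)^i * ((1203/1000::real)^(2*i+2) / (fact (i+1))^2)) > 1"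
  by (simp add: eval_nat_numeral fact_Suc)


definition j :: "real \<Rightarrow> real" where "j u = BesselJ0 (2*u)"

lemma stationary_iff: "stationary_diag u \<longleftrightarrow> u > 0 \<and> j u = 0"
proof -
  define D where "D = ps pc (\<i> * complex_of_real u)"
  have d1: "((\<lambda>t. M t u) has_vector_derivative D) (at u)" unfolding D_def by (rule M_deriv1)
  have fe: "(\<lambda>t. M u t) = (\<lambda>t. M t u)" by (rule ext) (rule M_sym)
  have D_eq: "D = exp (2 * (\<i> * complex_of_real u)) * complex_of_real (j u)"
    unfolding D_def P_eq Q_iu j_def ..
  have "D = 0 \<longleftrightarrow> j u = 0" unfolding D_eq by simp
  moreover have "((\<lambda>t. M t u) has_vector_derivative 0) (at u) \<longleftrightarrow> D = 0"
  proof
    assume "((\<lambda>t. M t u) has_vector_derivative 0) (at u)"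
    from vector_derivative_unique_at[OF d1 this] show "D = 0" .
  next
    assume "D = 0" thus "((\<lambda>t. M t u) has_vector_derivative 0) (at u)" using d1 by simp
  qed
  ultimately show ?thesis unfolding stationary_diag_def fe by auto
qed

lemma j_deriv: "(j has_real_derivative - Im (ps (diffs qc) (\<i> * complex_of_real u))) (at u)"
proof -
  have c: "((\<lambda>x. ps qc (\<i> * x)) has_field_derivative ps (diffs qc) (\<i> * complex_of_real u) * \<i>) (at (complex_of_real u))"
    by (rule chain_i[OF ps_deriv[OF summable_qc]])
  have "((\<lambda>t. ps qc (\<i> * complex_of_real t)) has_vector_derivative ps (diffs qc) (\<i> * complex_of_real u) * \<i>) (at u)"
    by (rule has_vector_derivative_real_field[OF c])
  from has_field_derivative_Re[OF this]
  have "((\<lambda>t. Re (ps qc (\<i> * complex_of_real t))) has_real_derivative Re (ps (diffs qc) (\<i> * complex_of_real u) * \<i>)) (at u)" .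
  moreover have "(\<lambda>t. Re (ps qc (\<i> * complex_of_real t))) = j"
    by (rule ext) (simp add: Q_iu j_def)
  ultimately show ?thesis by simp
qed

lemma j_cont: "continuous_on S j"
  by (rule continuous_at_imp_continuous_on) (auto intro: DERIV_isCont[OF j_deriv])

definition a_seq :: "real \<Rightarrow> nat \<Rightarrow> real" where
  "a_seq u k = 2 * u^(2*k+1) / (fact k * fact (k+1))"

lemma Im_iu_pow: "Im ((\<i> * complex_of_real u)^(2*k+1)) = (-1)^k * u^(2*k+1)"
proof -
  have b: "(\<i> * complex_of_real u)^2 = complex_of_real (-(u*u))"
  proof -
    have "(\<i> * complex_of_real u)^2 = (\<i> * \<i>) * (complex_of_real u * complex_of_real u)"
      unfolding power2_eq_square by (simp only: mult_ac)
    thus ?thesis by simp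
  qed
  have a: "(\<i> * complex_of_real u)^(2*k+1) = (\<i> * complex_of_real u) * ((\<i> * complex_of_real u)^2)^k"
    unfolding power_add power_mult by simp
  have "(\<i> * complex_of_real u)^(2*k+1) = \<i> * complex_of_real ((-(u*u))^k * u)"
    unfolding a b by (simp add: mult_ac)
  moreover have "(-(u*u))^k * u = (-1)^k * u^(2*k+1)"
  proof -
    have e1: "(-(u*u))^k = (-1)^k * (u*u)^k" by (rule power_minus)
    have e2: "u^(2*k+1) = (u*u)^k * u" by (simp only: power_add power_mult power2_eq_square power_one_right)
    show ?thesis unfolding e1 e2 by (simp only: mult_ac)
  qed
  ultimately have X: "(\<i> * complex_of_real u)^(2*k+1) = \<i> * complex_of_real ((-1)^k * u^(2*k+1))"
    by (simp only:)
  have Y: "Im (\<i> * complex_of_real r) = r" for r by simp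
  show ?thesis unfolding X Y ..
qed

lemma Im_Q'_iu: "Im (ps (diffs qc) (\<i> * complex_of_real u)) = (\<Sum>k. (-1)^k * a_seq u k)"
proof -
  define f where "f n = complex_of_real (diffs qc n) * (\<i> * complex_of_real u)^n" for n
  have s: "summable f" unfolding f_def by (rule ps_diffs_summable[OF summable_qc])
  have "Im (ps (diffs qc) (\<i> * complex_of_real u)) = (\<Sum>n. Im (f n))"
    unfolding ps_def f_def[symmetric] by (rule Im_suminf[OF s])
  also have "\<dots> = (\<Sum>k. Im (f (2*k+1)))"
  proof (rule suminf_mono_reindex[symmetric])
    show "strict_mono (\<lambda>k::nat. 2*k+1)" by (auto simp: strict_mono_def)
    fix n assume "n \<notin> range (\<lambda>k::nat. 2*k+1)"
    hence "even n" by (metis oddE rangeI)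
    thus "Im (f n) = 0" by (simp add: f_def diffs_def qc_def)
  qed
  also have "\<dots> = (\<Sum>k. (-1)^k * a_seq u k)"
  proof (rule suminf_cong)
    fix k
    have dq: "diffs qc (2*k+1) = 2 / (fact k * fact (k+1))"
    proof -
      have "diffs qc (2*k+1) = (2*real k+2) / (fact (k+1))^2"
        by (simp add: diffs_def qc_def)
      also have "\<dots> = 2 / (fact k * fact (k+1))"
      proof -
        have g: "(2*x) / ((x*F)^2) = 2 / (F*(x*F))" if "x \<noteq> 0" "F \<noteq> 0" for x F :: real
          using that by (simp add: field_simps power2_eq_square)
        have "2 * real k + 2 = 2 * (real k + 1)" by simp
        thus ?thesis unfolding fact_plus1[of k] using g[of "real k + 1" "fact k"] by simp
      qed
      finally show ?thesis .
    qed
    have "Im (f (2*k+1)) = diffs qc (2*k+1) * Im ((\<i> * complex_of_real u)^(2*k+1))"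
      by (simp add: f_def)
    also have "\<dots> = (-1)^k * a_seq u k"
      unfolding dq Im_iu_pow a_seq_def by (simp add: field_simps)
    finally show "Im (f (2*k+1)) = (-1)^k * a_seq u k" .
  qed
  finally show ?thesis .
qed

lemma a_seq_step: "a_seq u (Suc k) = a_seq u k * (u^2 / ((real k + 1) * (real k + 2)))"
proof -
  have f1: "(fact (Suc k) :: real) = (real k + 1) * fact k" by (simp add: fact_Suc)
  have f2: "(fact (Suc k + 1) :: real) = (real k + 2) * ((real k + 1) * fact k)"
    by (simp add: fact_Suc algebra_simps)
  show ?thesis unfolding a_seq_def
    by (simp only: f1 f2 Suc_eq_plus1[symmetric] fact_plus1) (simp add: field_simps power_add power2_eq_square)
qed


lemma se_zero: "(\<lambda>k. (x::real)^k / fact k) \<longlonglongrightarrow> 0"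
  by (rule summable_LIMSEQ_zero[OF se])

lemma a_seq_props:
  assumes "u > 0" "u^2 < 2"
  shows "(\<Sum>k. (-1)^k * a_seq u k) > 0"
proof -
  have pos: "\<And>k. 0 \<le> a_seq u k" using assms by (simp add: a_seq_def)
  have mono: "\<And>k. a_seq u (Suc k) \<le> a_seq u k"
  proof -
    fix k
    have "u^2 / ((real k + 1) * (real k + 2)) \<le> 1"
    proof -
      have "u^2 \<le> 2" using assms by simp
      also have "(2::real) \<le> (real k + 1) * (real k + 2)"
        using mult_mono[of 1 "real k+1" 2 "real k+2"] by simp
      finally show ?thesis by (simp add: divide_le_eq)
    qed
    hence "a_seq u k * (u^2 / ((real k + 1) * (real k + 2))) \<le> a_seq u k * 1"
      by (intro mult_left_mono pos)
    thus "a_seq u (Suc k) \<le> a_seq u k" unfolding a_seq_step by simp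
  qed
  have lim: "a_seq u \<longlonglongrightarrow> 0"
  proof (rule Lim_null_comparison)
    show "((\<lambda>k. 2 * u * ((u^2)^k / fact k)) \<longlonglongrightarrow> 0)"
      using tendsto_mult_right_zero[OF se_zero[of "u^2"], of "2*u"] by simp
    show "\<forall>\<^sub>F k in sequentially. norm (a_seq u k) \<le> 2 * u * ((u^2)^k / fact k)"
    proof (intro always_eventually allI)
      fix k
      have pw0: "u^(2*k) = (u^2)^k" by (rule power_mult)
      have pw: "u^(2*k+1) = u * (u^2)^k" unfolding power_add pw0 by simp
      have "a_seq u k = 2 * u * (u^2)^k / (fact k * fact (k+1))"
        unfolding a_seq_def pw by (simp add: mult_ac)
      also have "\<dots> \<le> 2 * u * (u^2)^k / fact k"
      proof (rule divide_left_mono)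
        have fk1: "(1::real) \<le> fact (k+1)" by (rule fact_ge_1)
        show "fact k \<le> fact k * (fact (k+1) :: real)"
          using mult_left_mono[OF fk1, of "fact k"] by simp
        show "0 \<le> 2 * u * (u^2)^k" using assms by simp
      qed simp
      finally show "norm (a_seq u k) \<le> 2 * u * ((u^2)^k / fact k)" using pos[of k] by simp
    qed
  qed
  have "(\<Sum>i<2*1. (-1)^i * a_seq u i) \<le> (\<Sum>i. (-1)^i * a_seq u i)"
    by (rule summable_Leibniz'(2)[OF lim pos mono])
  moreover have "(\<Sum>i<2*1. (-1)^i * a_seq u i) = u * (2 - u^2)"
    by (simp add: a_seq_def numeral_2_eq_2 power2_eq_square algebra_simps)
  moreover have "u * (2 - u^2) > 0" using assms by simp
  ultimately show ?thesis by linarith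
qed

lemma j_decreasing:
  assumes "0 < a" "a < b" "b^2 < 2"
  shows "j b < j a"
proof (rule DERIV_neg_imp_decreasing[OF assms(2)])
  fix x assume x: "a \<le> x" "x \<le> b"
  have "x > 0" using x assms by simp
  moreover have "x^2 < 2"
  proof -
    have "x^2 \<le> b^2" using x \<open>x > 0\<close> by (intro power_mono) auto
    thus ?thesis using assms by simp
  qed
  ultimately have "- Im (ps (diffs qc) (\<i> * complex_of_real x)) < 0"
    unfolding Im_Q'_iu using a_seq_props by simp
  thus "\<exists>y. (j has_real_derivative y) (at x) \<and> y < 0" using j_deriv by blast
qed

definition c_seq :: "real \<Rightarrow> nat \<Rightarrow> real" where
  "c_seq u k = u^(2*k+2) / (fact (k+1))^2"

lemma c_seq_leibniz:
  assumes "0 \<le> u" "u \<le> 2"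
  shows "j u = 1 - (\<Sum>k. (-1)^k * c_seq u k)"
    and "(\<Sum>i<2*n. (-1)^i * c_seq u i) \<le> (\<Sum>k. (-1)^k * c_seq u k)"
    and "(\<Sum>k. (-1)^k * c_seq u k) \<le> (\<Sum>i<2*n+1. (-1)^i * c_seq u i)"
proof -
  have pos: "\<And>k. 0 \<le> c_seq u k" using assms by (simp add: c_seq_def)
  have mono: "\<And>k. c_seq u (Suc k) \<le> c_seq u k"
  proof -
    fix k
    have st: "c_seq u (Suc k) = c_seq u k * (u^2 / (real k + 2)^2)"
    proof -
      have "(fact (Suc k + 1) :: real) = (real k + 2) * fact (k+1)"
        by (simp add: fact_Suc algebra_simps)
      thus ?thesis unfolding c_seq_def
        by (simp add: field_simps power_add power2_eq_square)
    qed
    have "u^2 \<le> (real k + 2)^2" using assms by (intro power_mono) auto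
    hence "u^2 / (real k + 2)^2 \<le> 1" by (simp add: divide_le_eq)
    hence "c_seq u k * (u^2 / (real k + 2)^2) \<le> c_seq u k * 1" by (intro mult_left_mono pos)
    thus "c_seq u (Suc k) \<le> c_seq u k" unfolding st by simp
  qed
  have lim: "c_seq u \<longlonglongrightarrow> 0"
  proof (rule Lim_null_comparison)
    show "((\<lambda>k. (u^2)^(Suc k) / fact (Suc k)) \<longlonglongrightarrow> 0)"
      using LIMSEQ_Suc[OF se_zero[of "u^2"]] .
    show "\<forall>\<^sub>F k in sequentially. norm (c_seq u k) \<le> (u^2)^(Suc k) / fact (Suc k)"
    proof (intro always_eventually allI)
      fix k
      have e2: "2*k+2 = 2 * Suc k" by simp
      have "c_seq u k = (u^2)^(Suc k) / (fact (Suc k))^2"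
        unfolding c_seq_def e2 power_mult by simp
      also have "\<dots> \<le> (u^2)^(Suc k) / fact (Suc k)"
      proof (rule divide_left_mono)
        have f1: "(1::real) \<le> fact (Suc k)" by (rule fact_ge_1)
        show "fact (Suc k) \<le> (fact (Suc k) :: real)^2"
          using mult_left_mono[OF f1, of "fact (Suc k)"] by (simp add: power2_eq_square)
      qed simp_all
      finally show "norm (c_seq u k) \<le> (u^2)^(Suc k) / fact (Suc k)" using pos[of k] by simp
    qed
  qed
  note L = summable_Leibniz'[OF lim pos mono]
  show "(\<Sum>i<2*n. (-1)^i * c_seq u i) \<le> (\<Sum>k. (-1)^k * c_seq u k)" by (rule L(2))
  show "(\<Sum>k. (-1)^k * c_seq u k) \<le> (\<Sum>i<2*n+1. (-1)^i * c_seq u i)" by (rule L(4))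
  define f where "f k = (-1)^k * u^(2*k) / (fact k)^2" for k
  have sf: "summable f" unfolding f_def by (rule J0_summable)
  have "(\<Sum>k. f (Suc k)) = suminf f - f 0" by (rule suminf_split_head[OF sf])
  moreover have "(\<lambda>k. f (Suc k)) = (\<lambda>k. - ((-1)^k * c_seq u k))"
    by (rule ext) (simp add: f_def c_seq_def)
  moreover have "(\<Sum>k. - ((-1)^k * c_seq u k)) = - (\<Sum>k. (-1)^k * c_seq u k)"
    by (rule suminf_minus[OF L(1)])
  moreover have "j u = suminf f" unfolding j_def J0_sum f_def ..
  ultimately show "j u = 1 - (\<Sum>k. (-1)^k * c_seq u k)" by (simp add: f_def)
qed

lemma j_1201: "j (1201/1000) > 0"
proof -
  have "(\<Sum>k. (-1)^k * c_seq (1201/1000) k) \<le> (\<Sum>i<2*3+1. (-1)^i * c_seq (1201/1000) i)"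
    by (rule c_seq_leibniz(3)) auto
  also have "\<dots> < 1"
  proof -
    have e: "2*3+1 = (7::nat)" by simp
    show ?thesis unfolding e c_seq_def by (rule num1)
  qed
  finally have "(\<Sum>k. (-1)^k * c_seq (1201/1000) k) < 1" .
  hence "0 < 1 - (\<Sum>k. (-1)^k * c_seq (1201/1000) k)" by simp
  also have "\<dots> = j (1201/1000)" by (rule c_seq_leibniz(1)[symmetric]) auto
  finally show ?thesis .
qed

lemma j_1203: "j (1203/1000) < 0"
proof -
  have "1 < (\<Sum>i<2*3. (-1)^i * c_seq (1203/1000) i)"
  proof -
    have e: "2*3 = (6::nat)" by simp
    show ?thesis unfolding e c_seq_def by (rule num2)
  qed
  also have "\<dots> \<le> (\<Sum>k. (-1)^k * c_seq (1203/1000) k)"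
    by (rule c_seq_leibniz(2)) auto
  finally have "1 < (\<Sum>k. (-1)^k * c_seq (1203/1000) k)" .
  hence "1 - (\<Sum>k. (-1)^k * c_seq (1203/1000) k) < 0" by simp
  moreover have "j (1203/1000) = 1 - (\<Sum>k. (-1)^k * c_seq (1203/1000) k)" by (rule c_seq_leibniz(1)) auto
  ultimately show ?thesis by simp
qed

theorem proposition2:
  shows "\<exists>us. stationary_diag us
      \<and> (\<forall>u. stationary_diag u \<longrightarrow> us \<le> u)
      \<and> BesselJ0 (2 * us) = 0
      \<and> (\<forall>v>0. BesselJ0 (2 * v) = 0 \<longrightarrow> us \<le> v)
      \<and> 1.201 < us \<and> us < 1.203
      \<and> (\<forall>u. stationary_diag u \<longrightarrow>
            cmod (M us us / (2 * \<i>)) \<le> cmod (M u u / (2 * \<i>)))"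
proof -
  have "\<exists>x. 1201/1000 \<le> x \<and> x \<le> 1203/1000 \<and> j x = 0"
    by (rule IVT2') (use j_1201 j_1203 j_cont in auto)
  then obtain us where us: "1201/1000 \<le> us" "us \<le> 1203/1000" "j us = 0" by blast
  have us1: "1201/1000 < us" using us j_1201 by (cases "us = 1201/1000") auto
  have us2: "us < 1203/1000" using us j_1203 by (cases "us = 1203/1000") auto
  have usq: "us^2 < 2"
  proof -
    have "us^2 \<le> (1203/1000)^2" using us us1 by (intro power_mono) auto
    moreover have "(1203/1000::real)^2 < 2" by (simp add: power2_eq_square)
    ultimately show ?thesis by linarith
  qed
  have min: "us \<le> v" if "v > 0" "j v = 0" for v
  proof (rule ccontr)
    assume "\<not> us \<le> v"
    hence "v < us" by simp
    from j_decreasing[OF \<open>v > 0\<close> this usq] show False using that us by simp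
  qed
  have st: "stationary_diag us" unfolding stationary_iff using us us1 by simp
  show ?thesis
  proof (intro exI conjI allI impI)
    show "stationary_diag us" by (rule st)
    show "us \<le> u" if "stationary_diag u" for u using that min unfolding stationary_iff by blast
    show "BesselJ0 (2 * us) = 0" using us unfolding j_def by simp
    show "us \<le> v" if "v > 0" "BesselJ0 (2 * v) = 0" for v using that min unfolding j_def by blast
    show "1.201 < us" using us1 by simp
    show "us < 1.203" using us2 by simp
    show "cmod (M us us / (2 * \<i>)) \<le> cmod (M u u / (2 * \<i>))" if "stationary_diag u" for u
    proof (rule norm_mono)
      show "0 \<le> us" using us1 by simp
      show "us \<le> u" using that min unfolding stationary_iff by blast
    qed
  qed
qed

end
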